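(* Let $m>0$, $n$ an odd positive integer, $V=[-m/2,m/2]$. For every dataset $D\in V^n$ and every $\ell\in V$, $$\mathrm{SWDIFF}(D,\ell)=|\mathcal{T}(D)-\ell|+2\sum_{j\in C(D,\ell)}|x_j-\ell|,$$ where $C(D,\ell)$ is the set of crossed agents.
   Context: A dataset is $D=(x_1,\dots,x_n)\in V^n$ of agent locations, indexed so that $x_1\le\dots\le x_n$. The optimal facility location is the median $\mathcal{T}(D)=x_{\lceil n/2\rceil}$. The social welfare of a facility at $\ell$ is $s(D,\ell)=-\sum_{i=1}^n|x_i-\ell|$, and $\mathrm{SWDIFF}(D,\ell)=s(D,\mathcal{T}(D))-s(D,\ell)$. The set of crossed agents is $C(D,\ell)=\{i: i<\lceil n/2\rceil,\ x_i\in[\ell,\mathcal{T}(D)]\}$ if $\ell<\mathcal{T}(D)$; $C(D,\ell)=\{i: i>\lceil n/2\rceil,\ x_i\in[\mathcal{T}(D),\ell]\}$ if $\ell>\mathcal{T}(D)$; and $C(D,\ell)=\emptyset$ if $\ell=\mathcal{T}(D)$. *)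

theory Defs
  imports "HOL-Analysis.Analysis"
begin

text \<open>A dataset D = (x_1,...,x_n) is modelled as a function x :: nat => real,
  indexed over {1..n}, sorted nondecreasingly.\<close>

definition med_idx :: "nat \<Rightarrow> nat" where
  "med_idx n = nat \<lceil>real n / 2\<rceil>"

definition opt_loc :: "nat \<Rightarrow> (nat \<Rightarrow> real) \<Rightarrow> real" where
  "opt_loc n x = x (med_idx n)"

definition social_welfare :: "nat \<Rightarrow> (nat \<Rightarrow> real) \<Rightarrow> real \<Rightarrow> real" where
  "social_welfare n x l = - (\<Sum>i=1..n. \<bar>x i - l\<bar>)"

definition swdiff :: "nat \<Rightarrow> (nat \<Rightarrow> real) \<Rightarrow> real \<Rightarrow> real" where
  "swdiff n x l = social_welfare n x (opt_loc n x) - social_welfare n x l"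

definition crossed :: "nat \<Rightarrow> (nat \<Rightarrow> real) \<Rightarrow> real \<Rightarrow> nat set" where
  "crossed n x l =
     (if l < opt_loc n x then {i \<in> {1..n}. i < med_idx n \<and> x i \<in> {l..opt_loc n x}}
      else if l > opt_loc n x then {i \<in> {1..n}. i > med_idx n \<and> x i \<in> {opt_loc n x..l}}
      else {})"

end

theory Submission
  imports Defs
begin

lemma med_idx_odd: assumes "odd n" shows "med_idx n = (n + 1) div 2"
proof -
  obtain q where q: "n = 2*q+1" using assms oddE by blast
  have "real n / 2 = real q + 1/2" using q by simp
  hence "\<lceil>real n / 2\<rceil> = int q + 1" by linarith
  thus ?thesis unfolding med_idx_def using q by simp
qed

lemma sum_pm:
  fixes d :: real and k n :: nat
  assumes "1 \<le> k" "k \<le> n" "2*k = n+1"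
  shows "(\<Sum>i=1..n. if P i then d else - d) = (real (card {i\<in>{1..n}. P i}) - real (card {i\<in>{1..n}. \<not> P i})) * d"
proof -
  have "(\<Sum>i=1..n. if P i then d else - d) = (\<Sum>i\<in>{1..n} \<inter> {i. P i}. d) + (\<Sum>i\<in>{1..n} \<inter> - {i. P i}. - d)"
    using sum.If_cases[of "{1..n}" P "\<lambda>_. d" "\<lambda>_. - d"] by simp
  also have "{1..n} \<inter> {i. P i} = {i\<in>{1..n}. P i}" by auto
  also have "{1..n} \<inter> - {i. P i} = {i\<in>{1..n}. \<not> P i}" by auto
  finally show ?thesis by (simp add: algebra_simps)
qed

theorem theorem4p3:
  fixes m :: real and n :: nat and x :: "nat \<Rightarrow> real" and l :: real
  assumes "m > 0" and "odd n"
    and "\<forall>i\<in>{1..n}. x i \<in> {-m/2..m/2}"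
    and "\<forall>i j. 1 \<le> i \<longrightarrow> i \<le> j \<longrightarrow> j \<le> n \<longrightarrow> x i \<le> x j"
    and "l \<in> {-m/2..m/2}"
  shows "swdiff n x l = \<bar>opt_loc n x - l\<bar> + 2 * (\<Sum>j\<in>crossed n x l. \<bar>x j - l\<bar>)"
proof -
  define k where "k = med_idx n"
  define T where "T = opt_loc n x"
  have kk: "2*k = n+1" using med_idx_odd[OF assms(2)] assms(2) unfolding k_def by presburger
  have k1: "1 \<le> k" "k \<le> n" using kk by auto
  have T: "T = x k" unfolding T_def opt_loc_def k_def by simp
  have mono: "\<And>i j. 1 \<le> i \<Longrightarrow> i \<le> j \<Longrightarrow> j \<le> n \<Longrightarrow> x i \<le> x j" using assms(4) by blast
  have sw: "swdiff n x l = (\<Sum>i=1..n. \<bar>x i - l\<bar> - \<bar>x i - T\<bar>)"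
    unfolding swdiff_def social_welfare_def T_def by (simp add: sum_subtractf)
  have c1: "card {i\<in>{1..n}. k \<le> i} = k"
  proof -
    have "{i\<in>{1..n}. k \<le> i} = {k..n}" using k1 by auto
    thus ?thesis using kk by simp
  qed
  have c2: "card {i\<in>{1..n}. \<not> k \<le> i} = k - 1"
  proof -
    have "{i\<in>{1..n}. \<not> k \<le> i} = {1..<k}" using k1 by auto
    thus ?thesis by simp
  qed
  have c3: "card {i\<in>{1..n}. k < i} = k - 1"
  proof -
    have "{i\<in>{1..n}. k < i} = {k<..n}" using k1 by auto
    thus ?thesis using kk by simp
  qed
  have c4: "card {i\<in>{1..n}. \<not> k < i} = k"
  proof -
    have "{i\<in>{1..n}. \<not> k < i} = {1..k}" using k1 by auto
    thus ?thesis by simp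
  qed
  consider "l < T" | "l > T" | "l = T" by linarith
  then show ?thesis
  proof cases
    case 1
    define C where "C = {i \<in> {1..n}. i < k \<and> x i \<in> {l..T}}"
    have CC: "crossed n x l = C" unfolding crossed_def C_def k_def T_def using 1 T_def by simp
    have "\<And>i. i \<in> {1..n} \<Longrightarrow> \<bar>x i - l\<bar> - \<bar>x i - T\<bar> =
        (if k \<le> i then T - l else - (T - l)) + (if i \<in> C then 2 * \<bar>x i - l\<bar> else 0)"
    proof -
      fix i assume i: "i \<in> {1..n}"
      show "?thesis i"
      proof (cases "k \<le> i")
        case True
        hence "T \<le> x i" using T mono[of k i] i k1 by auto
        thus ?thesis using True 1 unfolding C_def by auto
      next
        case False
        hence "x i \<le> T" using T mono[of i k] i k1 by auto
        thus ?thesis using False 1 i unfolding C_def by auto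
      qed
    qed
    hence "swdiff n x l = (\<Sum>i=1..n. (if k \<le> i then T - l else - (T - l)) + (if i \<in> C then 2 * \<bar>x i - l\<bar> else 0))"
      using sw by (metis (no_types, lifting) sum.cong)
    also have "\<dots> = (\<Sum>i=1..n. if k \<le> i then T - l else - (T - l)) + (\<Sum>i=1..n. if i \<in> C then 2 * \<bar>x i - l\<bar> else 0)"
      by (rule sum.distrib)
    also have "(\<Sum>i=1..n. if k \<le> i then T - l else - (T - l)) = T - l"
      using sum_pm[OF k1 kk, of "\<lambda>i. k \<le> i" "T - l"] c1 c2 k1 by (simp add: of_nat_diff algebra_simps)
    also have "(\<Sum>i=1..n. if i \<in> C then 2 * \<bar>x i - l\<bar> else 0) = (\<Sum>i\<in>C. 2 * \<bar>x i - l\<bar>)"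
      by (simp add: sum.If_cases C_def Int_def conj_commute)
    finally show ?thesis using 1 CC T_def by (simp add: sum_distrib_left)
  next
    case 2
    define C where "C = {i \<in> {1..n}. k < i \<and> x i \<in> {T..l}}"
    have CC: "crossed n x l = C" unfolding crossed_def C_def k_def T_def using 2 T_def by simp
    have "\<And>i. i \<in> {1..n} \<Longrightarrow> \<bar>x i - l\<bar> - \<bar>x i - T\<bar> =
        (if k < i then - (l - T) else l - T) + (if i \<in> C then 2 * \<bar>x i - l\<bar> else 0)"
    proof -
      fix i assume i: "i \<in> {1..n}"
      show "?thesis i"
      proof (cases "k < i")
        case True
        hence "T \<le> x i" using T mono[of k i] i k1 by auto
        thus ?thesis using True 2 i unfolding C_def by auto
      next
        case False
        hence "x i \<le> T" using T mono[of i k] i k1 by auto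
        thus ?thesis using False 2 unfolding C_def by auto
      qed
    qed
    hence "swdiff n x l = (\<Sum>i=1..n. (if k < i then - (l - T) else l - T) + (if i \<in> C then 2 * \<bar>x i - l\<bar> else 0))"
      using sw by (metis (no_types, lifting) sum.cong)
    also have "\<dots> = (\<Sum>i=1..n. if k < i then - (l - T) else l - T) + (\<Sum>i=1..n. if i \<in> C then 2 * \<bar>x i - l\<bar> else 0)"
      by (rule sum.distrib)
    also have "(\<Sum>i=1..n. if k < i then - (l - T) else l - T) = l - T"
    proof -
      have e: "(\<Sum>i=1..n. if k < i then - (l - T) else l - T) = (real (k - 1) - real k) * (- (l - T))"
        using sum_pm[OF k1 kk, of "\<lambda>i. k < i" "- (l - T)"] c3 c4 by (simp cong: if_cong)
      show ?thesis using e k1 by (simp add: of_nat_diff algebra_simps)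
    qed
    also have "(\<Sum>i=1..n. if i \<in> C then 2 * \<bar>x i - l\<bar> else 0) = (\<Sum>i\<in>C. 2 * \<bar>x i - l\<bar>)"
      by (simp add: sum.If_cases C_def Int_def conj_commute)
    finally show ?thesis using 2 CC T_def by (simp add: sum_distrib_left)
  next
    case 3
    thus ?thesis using sw unfolding crossed_def T_def swdiff_def by simp
  qed
qed

end
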